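(* Let $R$ be a finite Frobenius ring, let $\mathrm{soc}(R)$ denote its socle and $\mathrm{rad}(R)$ its Jacobson radical, and let $\psi:\mathrm{soc}(R)\to R/\mathrm{rad}(R)$ be an isomorphism of left $R$-modules. Let $\tilde{\omega}$ be the normalized homogeneous weight on the ring $R/\mathrm{rad}(R)$. Then the normalized homogeneous weight $\omega$ on $R$ is given by \[ \omega(x)=\begin{cases}\tilde{\omega}(\psi(x)), & x\in\mathrm{soc}(R),\\ 1, & x\notin \mathrm{soc}(R).\end{cases} \]
   Context: A finite ring $R$ (with identity) is Frobenius if ${}_R\mathrm{soc}({}_RR)\cong {}_R(R/\mathrm{rad}(R))$ as left $R$-modules (equivalently the right-sided version); for Frobenius rings the left and right socles coincide and are denoted $\mathrm{soc}(R)$. $R/\mathrm{rad}(R)$ is again a finite Frobenius (semisimple) ring. The normalized homogeneous weight on a finite Frobenius ring $R$ is the unique map $\omega:R\to\mathbb{R}$ with $\omega(0)=0$, $\omega(x)=\omega(y)$ whenever $Rx=Ry$, and $\sum_{y\in Rx}\omega(y)=|Rx|$ for every $x\in R\setminus\{0\}$. *)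

theory Defs
  imports "HOL-Algebra.Algebra"
begin

definition left_ideal :: "('a, 'b) ring_scheme \<Rightarrow> 'a set \<Rightarrow> bool" where
  "left_ideal R I \<longleftrightarrow> additive_subgroup I R \<and>
     (\<forall>r \<in> carrier R. \<forall>x \<in> I. r \<otimes>\<^bsub>R\<^esub> x \<in> I)"

definition maximal_left_ideal :: "('a, 'b) ring_scheme \<Rightarrow> 'a set \<Rightarrow> bool" where
  "maximal_left_ideal R I \<longleftrightarrow> left_ideal R I \<and> I \<noteq> carrier R \<and>
     (\<forall>J. left_ideal R J \<and> I \<subseteq> J \<and> J \<noteq> carrier R \<longrightarrow> J = I)"

definition minimal_left_ideal :: "('a, 'b) ring_scheme \<Rightarrow> 'a set \<Rightarrow> bool" where
  "minimal_left_ideal R I \<longleftrightarrow> left_ideal R I \<and> I \<noteq> {\<zero>\<^bsub>R\<^esub>} \<and>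
     (\<forall>J. left_ideal R J \<and> J \<subseteq> I \<and> J \<noteq> {\<zero>\<^bsub>R\<^esub>} \<longrightarrow> J = I)"

definition jrad :: "('a, 'b) ring_scheme \<Rightarrow> 'a set" where
  "jrad R = carrier R \<inter> \<Inter> {I. maximal_left_ideal R I}"

(* (left) socle: sum of all minimal left ideals, i.e. the smallest left ideal
   containing every minimal left ideal *)
definition soc :: "('a, 'b) ring_scheme \<Rightarrow> 'a set" where
  "soc R = \<Inter> {I. left_ideal R I \<and> (\<forall>M. minimal_left_ideal R M \<longrightarrow> M \<subseteq> I)}"

(* isomorphism of left R-modules  soc(R) \<rightarrow> R/rad(R), where R acts on R/rad(R)
   by r . (rad(R) + a) = (rad(R) + r)(rad(R) + a) = rad(R) + r a *)
definition soc_top_iso :: "('a, 'b) ring_scheme \<Rightarrow> ('a \<Rightarrow> 'a set) \<Rightarrow> bool" where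
  "soc_top_iso R \<psi> \<longleftrightarrow>
     bij_betw \<psi> (soc R) (carrier (R Quot jrad R)) \<and>
     (\<forall>x \<in> soc R. \<forall>y \<in> soc R.
        \<psi> (x \<oplus>\<^bsub>R\<^esub> y) = \<psi> x \<oplus>\<^bsub>R Quot jrad R\<^esub> \<psi> y) \<and>
     (\<forall>r \<in> carrier R. \<forall>x \<in> soc R.
        \<psi> (r \<otimes>\<^bsub>R\<^esub> x) = (jrad R +>\<^bsub>R\<^esub> r) \<otimes>\<^bsub>R Quot jrad R\<^esub> \<psi> x)"

definition frobenius_ring :: "('a, 'b) ring_scheme \<Rightarrow> bool" where
  "frobenius_ring R \<longleftrightarrow> ring R \<and> finite (carrier R) \<and> (\<exists>\<psi>. soc_top_iso R \<psi>)"

definition lprinc :: "('a, 'b) ring_scheme \<Rightarrow> 'a \<Rightarrow> 'a set" where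
  "lprinc S x = {r \<otimes>\<^bsub>S\<^esub> x | r. r \<in> carrier S}"

definition normalized_homogeneous_weight :: "('a, 'b) ring_scheme \<Rightarrow> ('a \<Rightarrow> real) \<Rightarrow> bool" where
  "normalized_homogeneous_weight S w \<longleftrightarrow>
     w \<zero>\<^bsub>S\<^esub> = 0 \<and>
     (\<forall>x \<in> carrier S. \<forall>y \<in> carrier S. lprinc S x = lprinc S y \<longrightarrow> w x = w y) \<and>
     (\<forall>x \<in> carrier S - {\<zero>\<^bsub>S\<^esub>}. (\<Sum>y \<in> lprinc S x. w y) = real (card (lprinc S x)))"

end

theory Submission
  imports Defs
begin
context ring begin
lemma li_intro:
  assumes "I \<subseteq> carrier R" "\<zero> \<in> I" "\<And>a b. a\<in>I \<Longrightarrow> b\<in>I \<Longrightarrow> a\<oplus>b \<in> I"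
    "\<And>a. a\<in>I \<Longrightarrow> \<ominus>a \<in> I" "\<And>r a. r\<in>carrier R \<Longrightarrow> a\<in>I \<Longrightarrow> r\<otimes>a \<in> I"
  shows "left_ideal R I"
proof -
  have "subgroup I (add_monoid R)"
  proof (rule subgroup.intro)
    show "I \<subseteq> carrier (add_monoid R)" using assms(1) by simp
    show "\<And>x y. x \<in> I \<Longrightarrow> y \<in> I \<Longrightarrow> x \<otimes>\<^bsub>add_monoid R\<^esub> y \<in> I" using assms(3) by simp
    show "\<one>\<^bsub>add_monoid R\<^esub> \<in> I" using assms(2) by simp
    show "\<And>x. x \<in> I \<Longrightarrow> inv\<^bsub>add_monoid R\<^esub> x \<in> I" using assms(4) by (simp add: a_inv_def[symmetric])
  qed
  then show ?thesis unfolding left_ideal_def using assms(5) by (simp add: additive_subgroupI)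
qed

lemma li_as: "left_ideal R I \<Longrightarrow> additive_subgroup I R"
  unfolding left_ideal_def by (erule conjunct1)
lemma li_sub: "left_ideal R I \<Longrightarrow> I \<subseteq> carrier R"
  by (rule additive_subgroup.a_subset[OF li_as])
lemma li_zero: "left_ideal R I \<Longrightarrow> \<zero> \<in> I"
  by (rule additive_subgroup.zero_closed[OF li_as])
lemma li_add: "left_ideal R I \<Longrightarrow> a\<in>I \<Longrightarrow> b\<in>I \<Longrightarrow> a \<oplus> b \<in> I"
  by (rule additive_subgroup.a_closed[OF li_as])
lemma li_neg: "left_ideal R I \<Longrightarrow> a\<in>I \<Longrightarrow> \<ominus> a \<in> I"
  by (rule additive_subgroup.a_inv_closed[OF li_as])
lemma li_minus: "left_ideal R I \<Longrightarrow> a\<in>I \<Longrightarrow> b\<in>I \<Longrightarrow> a \<ominus> b \<in> I"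
  unfolding a_minus_def by (intro li_add li_neg)
lemma li_mult: "left_ideal R I \<Longrightarrow> r \<in> carrier R \<Longrightarrow> a\<in>I \<Longrightarrow> r \<otimes> a \<in> I"
  unfolding left_ideal_def by blast
lemma li_carrier: "left_ideal R (carrier R)"
  by (rule li_intro) auto
lemma li_Int:
  assumes "left_ideal R I" "left_ideal R K" shows "left_ideal R (I \<inter> K)"
proof (rule li_intro)
  show "I \<inter> K \<subseteq> carrier R" using li_sub[OF assms(1)] by blast
  show "\<zero> \<in> I \<inter> K" using li_zero assms by blast
  show "\<And>a b. a \<in> I \<inter> K \<Longrightarrow> b \<in> I \<inter> K \<Longrightarrow> a \<oplus> b \<in> I \<inter> K" using li_add assms by blast
  show "\<And>a. a \<in> I \<inter> K \<Longrightarrow> \<ominus> a \<in> I \<inter> K" using li_neg assms by blast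
  show "\<And>r a. r \<in> carrier R \<Longrightarrow> a \<in> I \<inter> K \<Longrightarrow> r \<otimes> a \<in> I \<inter> K" using li_mult assms by blast
qed

lemma lprincI: "r \<in> carrier R \<Longrightarrow> y = r \<otimes> x \<Longrightarrow> y \<in> lprinc R x"
  unfolding lprinc_def by blast
lemma lprincE: "y \<in> lprinc R x \<Longrightarrow> (\<And>r. r \<in> carrier R \<Longrightarrow> y = r \<otimes> x \<Longrightarrow> P) \<Longrightarrow> P"
  unfolding lprinc_def by blast

lemma lprinc_li:
  assumes x: "x \<in> carrier R" shows "left_ideal R (lprinc R x)"
proof (rule li_intro)
  show "lprinc R x \<subseteq> carrier R" using x by (auto simp: lprinc_def)
  show "\<zero> \<in> lprinc R x" by (rule lprincI[of \<zero>]) (simp_all add: x)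
  show "a \<oplus> b \<in> lprinc R x" if h: "a \<in> lprinc R x" "b \<in> lprinc R x" for a b
  proof -
    obtain r where r: "r \<in> carrier R" "a = r \<otimes> x" by (rule lprincE[OF h(1)])
    obtain s where s: "s \<in> carrier R" "b = s \<otimes> x" by (rule lprincE[OF h(2)])
    show ?thesis by (rule lprincI[of "r \<oplus> s"]) (simp_all add: r s x l_distr)
  qed
  show "\<ominus> a \<in> lprinc R x" if h: "a \<in> lprinc R x" for a
  proof -
    obtain r where r: "r \<in> carrier R" "a = r \<otimes> x" by (rule lprincE[OF h(1)])
    show ?thesis by (rule lprincI[of "\<ominus> r"]) (simp_all add: r x l_minus)
  qed
  show "s \<otimes> a \<in> lprinc R x" if h: "s \<in> carrier R" "a \<in> lprinc R x" for s a
  proof -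
    obtain r where r: "r \<in> carrier R" "a = r \<otimes> x" by (rule lprincE[OF h(2)])
    show ?thesis by (rule lprincI[of "s \<otimes> r"]) (simp_all add: r x h(1) m_assoc)
  qed
qed

lemma lprinc_self: "x \<in> carrier R \<Longrightarrow> x \<in> lprinc R x"
  unfolding lprinc_def by (auto intro!: exI[of _ \<one>])

lemma lprinc_sub: "left_ideal R I \<Longrightarrow> x \<in> I \<Longrightarrow> lprinc R x \<subseteq> I"
  unfolding lprinc_def using li_mult by blast

lemma lprinc_mono: "x \<in> carrier R \<Longrightarrow> y \<in> lprinc R x \<Longrightarrow> lprinc R y \<subseteq> lprinc R x"
  using lprinc_sub lprinc_li by blast

lemma soc_li: "left_ideal R (soc R)"
proof -
  let ?F = "{I. left_ideal R I \<and> (\<forall>M. minimal_left_ideal R M \<longrightarrow> M \<subseteq> I)}"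
  have cF: "carrier R \<in> ?F" using li_carrier by (auto simp: minimal_left_ideal_def dest: li_sub)
  have "left_ideal R (\<Inter>?F)"
  proof (rule li_intro)
    show "\<Inter>?F \<subseteq> carrier R" using cF by blast
    show "\<zero> \<in> \<Inter>?F" using li_zero by blast
    show "\<And>a b. a \<in> \<Inter>?F \<Longrightarrow> b \<in> \<Inter>?F \<Longrightarrow> a \<oplus> b \<in> \<Inter>?F" using li_add by blast
    show "\<And>a. a \<in> \<Inter>?F \<Longrightarrow> \<ominus> a \<in> \<Inter>?F" using li_neg by blast
    show "\<And>r a. r \<in> carrier R \<Longrightarrow> a \<in> \<Inter>?F \<Longrightarrow> r \<otimes> a \<in> \<Inter>?F" using li_mult by blast
  qed
  then show ?thesis unfolding soc_def .
qed

lemma min_sub_soc: "minimal_left_ideal R M \<Longrightarrow> M \<subseteq> soc R"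
  unfolding soc_def by blast

lemma max_li: "maximal_left_ideal R M \<Longrightarrow> left_ideal R M"
  unfolding maximal_left_ideal_def by blast

lemma jrad_li: "left_ideal R (jrad R)"
proof -
  let ?F = "{I. maximal_left_ideal R I}"
  have "left_ideal R (carrier R \<inter> \<Inter>?F)"
  proof (rule li_intro)
    show "carrier R \<inter> \<Inter>?F \<subseteq> carrier R" by blast
    show "\<zero> \<in> carrier R \<inter> \<Inter>?F" using li_zero max_li by blast
    show "\<And>a b. a \<in> carrier R \<inter> \<Inter>?F \<Longrightarrow> b \<in> carrier R \<inter> \<Inter>?F \<Longrightarrow> a \<oplus> b \<in> carrier R \<inter> \<Inter>?F"
      using li_add max_li by blast
    show "\<And>a. a \<in> carrier R \<inter> \<Inter>?F \<Longrightarrow> \<ominus> a \<in> carrier R \<inter> \<Inter>?F" using li_neg max_li by blast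
    show "\<And>r a. r \<in> carrier R \<Longrightarrow> a \<in> carrier R \<inter> \<Inter>?F \<Longrightarrow> r \<otimes> a \<in> carrier R \<inter> \<Inter>?F"
      using li_mult max_li by blast
  qed
  then show ?thesis unfolding jrad_def .
qed

definition lsum :: "'a set \<Rightarrow> 'a set \<Rightarrow> 'a set" where
  "lsum I K = {a \<oplus> b | a b. a \<in> I \<and> b \<in> K}"

lemma lsumI: "a \<in> I \<Longrightarrow> b \<in> K \<Longrightarrow> y = a \<oplus> b \<Longrightarrow> y \<in> lsum I K"
  unfolding lsum_def by blast
lemma lsumE: "y \<in> lsum I K \<Longrightarrow> (\<And>a b. a \<in> I \<Longrightarrow> b \<in> K \<Longrightarrow> y = a \<oplus> b \<Longrightarrow> P) \<Longrightarrow> P"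
  unfolding lsum_def by blast

lemma li_sum:
  assumes I: "left_ideal R I" and K: "left_ideal R K" shows "left_ideal R (lsum I K)"
proof (rule li_intro)
  note sI = li_sub[OF I] and sK = li_sub[OF K]
  show "lsum I K \<subseteq> carrier R" using sI sK by (auto simp: lsum_def)
  show "\<zero> \<in> lsum I K" by (rule lsumI[of \<zero> _ \<zero>]) (simp_all add: li_zero I K)
  show "a \<oplus> b \<in> lsum I K" if h: "a \<in> lsum I K" "b \<in> lsum I K" for a b
  proof -
    obtain a1 a2 where a: "a1 \<in> I" "a2 \<in> K" "a = a1 \<oplus> a2" by (rule lsumE[OF h(1)])
    obtain b1 b2 where b: "b1 \<in> I" "b2 \<in> K" "b = b1 \<oplus> b2" by (rule lsumE[OF h(2)])
    have c: "a1 \<in> carrier R" "a2 \<in> carrier R" "b1 \<in> carrier R" "b2 \<in> carrier R" using a b sI sK by auto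
    show ?thesis
      by (rule lsumI[of "a1 \<oplus> b1" _ "a2 \<oplus> b2"]) (simp_all add: a b li_add I K c a_ac)
  qed
  show "\<ominus> a \<in> lsum I K" if h: "a \<in> lsum I K" for a
  proof -
    obtain a1 a2 where a: "a1 \<in> I" "a2 \<in> K" "a = a1 \<oplus> a2" by (rule lsumE[OF h(1)])
    have c: "a1 \<in> carrier R" "a2 \<in> carrier R" using a sI sK by auto
    show ?thesis
      by (rule lsumI[of "\<ominus> a1" _ "\<ominus> a2"]) (simp_all add: a li_neg I K c minus_add)
  qed
  show "s \<otimes> a \<in> lsum I K" if h: "s \<in> carrier R" "a \<in> lsum I K" for s a
  proof -
    obtain a1 a2 where a: "a1 \<in> I" "a2 \<in> K" "a = a1 \<oplus> a2" by (rule lsumE[OF h(2)])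
    have c: "a1 \<in> carrier R" "a2 \<in> carrier R" using a sI sK by auto
    show ?thesis
      by (rule lsumI[of "s \<otimes> a1" _ "s \<otimes> a2"]) (simp_all add: a li_mult I K c h(1) r_distr)
  qed
qed

lemma maximal_sum:
  assumes M: "maximal_left_ideal R M" and I: "left_ideal R I" and nI: "\<not> I \<subseteq> M"
  shows "\<exists>a\<in>I. \<exists>m\<in>M. \<one> = a \<oplus> m"
proof -
  have LM: "left_ideal R M" using M by (rule max_li)
  have N: "left_ideal R (lsum I M)" by (rule li_sum[OF I LM])
  have MN: "M \<subseteq> lsum I M"
  proof
    fix m assume "m \<in> M"
    then show "m \<in> lsum I M" using li_zero[OF I] li_sub[OF LM] by (intro lsumI[of \<zero> _ m]) auto
  qed
  have IN: "I \<subseteq> lsum I M"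
  proof
    fix a assume "a \<in> I"
    then show "a \<in> lsum I M" using li_zero[OF LM] li_sub[OF I] by (intro lsumI[of a _ \<zero>]) auto
  qed
  have "lsum I M = carrier R"
  proof (rule ccontr)
    assume "lsum I M \<noteq> carrier R"
    then have "lsum I M = M" using M N MN unfolding maximal_left_ideal_def by blast
    then show False using IN nI by blast
  qed
  then have "\<one> \<in> lsum I M" by simp
  then show ?thesis by (rule lsumE) blast
qed

lemma li_rmult:
  assumes K: "left_ideal R K" and r: "r \<in> carrier R"
  shows "left_ideal R ((\<lambda>a. a \<otimes> r) ` K)"
proof (rule li_intro)
  note sK = li_sub[OF K]
  show "(\<lambda>a. a \<otimes> r) ` K \<subseteq> carrier R" using sK r by auto
  show "\<zero> \<in> (\<lambda>a. a \<otimes> r) ` K" using li_zero[OF K] r by (intro image_eqI[of _ _ \<zero>]) auto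
  show "a \<oplus> b \<in> (\<lambda>a. a \<otimes> r) ` K" if "a \<in> (\<lambda>a. a \<otimes> r) ` K" "b \<in> (\<lambda>a. a \<otimes> r) ` K" for a b
    using that li_add[OF K] sK r by (auto simp: l_distr[symmetric] subset_iff)
  show "\<ominus> a \<in> (\<lambda>a. a \<otimes> r) ` K" if "a \<in> (\<lambda>a. a \<otimes> r) ` K" for a
    using that li_neg[OF K] sK r by (auto simp: l_minus[symmetric] subset_iff)
  show "s \<otimes> a \<in> (\<lambda>a. a \<otimes> r) ` K" if "s \<in> carrier R" "a \<in> (\<lambda>a. a \<otimes> r) ` K" for s a
    using that li_mult[OF K] sK r by (auto simp: m_assoc[symmetric] subset_iff)
qed

lemma add_minus_cancel_left: "A \<in> carrier R \<Longrightarrow> B \<in> carrier R \<Longrightarrow> (A \<oplus> B) \<ominus> A = B"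
  by (simp add: a_minus_def a_comm[of A B] a_assoc r_neg)

lemma colon_max:
  assumes M: "maximal_left_ideal R M" and r: "r \<in> carrier R" and rM: "r \<notin> M"
  shows "maximal_left_ideal R {x \<in> carrier R. x \<otimes> r \<in> M}" (is "maximal_left_ideal R ?C")
proof -
  have LM: "left_ideal R M" using M by (rule max_li)
  note sM = li_sub[OF LM]
  have LC: "left_ideal R ?C"
  proof (rule li_intro)
    show "?C \<subseteq> carrier R" by blast
    show "\<zero> \<in> ?C" using r li_zero[OF LM] by simp
    show "a \<oplus> b \<in> ?C" if "a \<in> ?C" "b \<in> ?C" for a b
      using that r li_add[OF LM] by (simp add: l_distr)
    show "\<ominus> a \<in> ?C" if "a \<in> ?C" for a
      using that r li_neg[OF LM] by (simp add: l_minus)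
    show "s \<otimes> a \<in> ?C" if "s \<in> carrier R" "a \<in> ?C" for s a
      using that r li_mult[OF LM] by (simp add: m_assoc)
  qed
  have nC: "?C \<noteq> carrier R"
  proof
    assume eq: "?C = carrier R"
    have "\<one> \<in> ?C" unfolding eq by simp
    then show False using r rM by simp
  qed
  have "K = ?C" if K: "left_ideal R K" "?C \<subseteq> K" "K \<noteq> carrier R" for K
  proof (rule ccontr)
    assume "K \<noteq> ?C"
    then obtain k where k: "k \<in> K" "k \<notin> ?C" using K(2) by blast
    note sK = li_sub[OF K(1)]
    have kr: "k \<otimes> r \<notin> M" using k sK by auto
    have T: "left_ideal R ((\<lambda>a. a \<otimes> r) ` K)" by (rule li_rmult[OF K(1) r])
    have "\<not> (\<lambda>a. a \<otimes> r) ` K \<subseteq> M" using k kr by blast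
    then obtain t m where t: "t \<in> (\<lambda>a. a \<otimes> r) ` K" and m: "m \<in> M" and e: "\<one> = t \<oplus> m"
      using maximal_sum[OF M T] by blast
    obtain k' where k': "k' \<in> K" "t = k' \<otimes> r" using t by blast
    have ck': "k' \<in> carrier R" using k' sK by auto
    have cm: "m \<in> carrier R" using m sM by auto
    have "carrier R \<subseteq> K"
    proof
      fix x assume x: "x \<in> carrier R"
      define u where "u = x \<otimes> r"
      have cu: "u \<in> carrier R" using x r by (simp add: u_def)
      have "u = u \<otimes> \<one>" using cu by simp
      also have "\<dots> = u \<otimes> (k' \<otimes> r) \<oplus> u \<otimes> m" using e k' cu ck' r cm by (simp add: r_distr)
      finally have eu: "u = u \<otimes> (k' \<otimes> r) \<oplus> u \<otimes> m" .
      have "(x \<ominus> u \<otimes> k') \<otimes> r = u \<ominus> u \<otimes> (k' \<otimes> r)"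
        using x cu ck' r by (simp add: l_minus a_minus_def l_distr m_assoc u_def)
      also have "\<dots> = (u \<otimes> (k' \<otimes> r) \<oplus> u \<otimes> m) \<ominus> u \<otimes> (k' \<otimes> r)"
        by (rule arg_cong[where f="\<lambda>z. z \<ominus> u \<otimes> (k' \<otimes> r)"]) (rule eu)
      also have "\<dots> = u \<otimes> m" using cu ck' r cm by (simp add: add_minus_cancel_left)
      finally have "(x \<ominus> u \<otimes> k') \<otimes> r \<in> M" using li_mult[OF LM cu m] by simp
      then have "x \<ominus> u \<otimes> k' \<in> ?C" using x cu ck' by simp
      then have "x \<ominus> u \<otimes> k' \<in> K" using K(2) by blast
      moreover have "u \<otimes> k' \<in> K" using li_mult[OF K(1) cu k'(1)] .
      ultimately have "(x \<ominus> u \<otimes> k') \<oplus> u \<otimes> k' \<in> K" by (rule li_add[OF K(1)])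
      moreover have "(x \<ominus> u \<otimes> k') \<oplus> u \<otimes> k' = x" using x cu ck'
        by (simp add: a_minus_def a_assoc l_neg)
      ultimately show "x \<in> K" by simp
    qed
    then show False using K(3) sK by blast
  qed
  then show ?thesis unfolding maximal_left_ideal_def using LC nC by blast
qed

lemma jrad_ideal: "ideal (jrad R) R"
proof (rule idealI)
  show "ring R" by (rule ring_axioms)
  show "subgroup (jrad R) (add_monoid R)"
    by (rule additive_subgroup.a_subgroup[OF li_as[OF jrad_li]])
  show "x \<otimes> a \<in> jrad R" if "a \<in> jrad R" "x \<in> carrier R" for a x
    by (rule li_mult[OF jrad_li that(2) that(1)])
  show "a \<otimes> x \<in> jrad R" if a: "a \<in> jrad R" and x: "x \<in> carrier R" for a x
  proof -
    have ca: "a \<in> carrier R" using a by (simp add: jrad_def)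
    have "a \<otimes> x \<in> M" if M: "maximal_left_ideal R M" for M
    proof (cases "x \<in> M")
      case True then show ?thesis using li_mult[OF max_li[OF M] ca] by simp
    next
      case False
      have "maximal_left_ideal R {y \<in> carrier R. y \<otimes> x \<in> M}" by (rule colon_max[OF M x False])
      then have "a \<in> {y \<in> carrier R. y \<otimes> x \<in> M}" using a unfolding jrad_def by blast
      then show ?thesis by simp
    qed
    then show ?thesis using ca x unfolding jrad_def by auto
  qed
qed

lemma exists_minimal:
  assumes fin: "finite (carrier R)" and I: "left_ideal R I" and nz: "I \<noteq> {\<zero>}"
  shows "\<exists>K. minimal_left_ideal R K \<and> K \<subseteq> I"
proof -
  let ?S = "{K. left_ideal R K \<and> K \<subseteq> I \<and> K \<noteq> {\<zero>}}"
  have "I \<in> ?S" using I nz by blast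
  then obtain K where K: "K \<in> ?S" and Kmin: "\<And>K'. K' \<in> ?S \<Longrightarrow> card K \<le> card K'"
    using ex_has_least_nat[of "\<lambda>K. K \<in> ?S" I card] by blast
  have fK: "finite K" using K li_sub fin finite_subset by blast
  have "minimal_left_ideal R K"
    unfolding minimal_left_ideal_def
  proof (intro conjI allI impI)
    show "left_ideal R K" "K \<noteq> {\<zero>}" using K by auto
    fix J assume J: "left_ideal R J \<and> J \<subseteq> K \<and> J \<noteq> {\<zero>}"
    then have "J \<in> ?S" using K by blast
    then have "card K \<le> card J" by (rule Kmin)
    then show "J = K" using J fK card_seteq by blast
  qed
  then show ?thesis using K by blast
qed

lemma mult_one_minus:
  assumes "a \<in> carrier R" "c \<in> carrier R" shows "a \<otimes> (\<one> \<ominus> c) = a \<ominus> a \<otimes> c"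
  using assms by (simp add: a_minus_def r_distr r_minus)

lemma complement:
  assumes fin: "finite (carrier R)" and A: "left_ideal R A"
  shows "\<exists>a\<in>A. \<forall>c\<in>A. c \<ominus> c \<otimes> a \<in> jrad R"
proof -
  note sA = li_sub[OF A]
  have key: "F \<subseteq> {M. maximal_left_ideal R M} \<Longrightarrow>
     \<exists>B a b. left_ideal R B \<and> a \<in> A \<and> b \<in> B \<and> \<one> = a \<oplus> b \<and> (\<forall>M\<in>F. A \<inter> B \<subseteq> M)"
    if "finite F" for F
    using that
  proof (induction F rule: finite_induct)
    case empty
    have "left_ideal R (carrier R) \<and> \<zero> \<in> A \<and> \<one> \<in> carrier R \<and> \<one> = \<zero> \<oplus> \<one>"
      using li_carrier li_zero[OF A] by simp
    then show ?case by (intro exI[of _ "carrier R"] exI[of _ \<zero>] exI[of _ \<one>]) simp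
  next
    case (insert M F)
    then obtain B a b where IH: "left_ideal R B" "a \<in> A" "b \<in> B" "\<one> = a \<oplus> b" "\<forall>M\<in>F. A \<inter> B \<subseteq> M"
      by blast
    have Mm: "maximal_left_ideal R M" using insert.prems by blast
    note LM = max_li[OF Mm]
    show ?case
    proof (cases "A \<inter> B \<subseteq> M")
      case True
      have "\<forall>M'\<in>insert M F. A \<inter> B \<subseteq> M'" using IH(5) True by simp
      then show ?thesis using IH(1-4) by (intro exI[of _ B] exI[of _ a] exI[of _ b]) simp
    next
      case False
      have LAB: "left_ideal R (A \<inter> B)" by (rule li_Int[OF A IH(1)])
      obtain c m where c: "c \<in> A \<inter> B" and m: "m \<in> M" and e: "\<one> = c \<oplus> m"
        using maximal_sum[OF Mm LAB False] by blast
      have ca: "a \<in> carrier R" using IH(2) sA by blast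
      have cb: "b \<in> carrier R" using IH(3) li_sub[OF IH(1)] by blast
      have cc: "c \<in> carrier R" using c sA by blast
      have cm: "m \<in> carrier R" using m li_sub[OF LM] by blast
      have me: "m = \<one> \<ominus> c"
      proof -
        have "\<one> \<ominus> c = (c \<oplus> m) \<ominus> c" by (rule arg_cong[where f="\<lambda>z. z \<ominus> c"]) (rule e)
        also have "\<dots> = m" using cc cm by (rule add_minus_cancel_left)
        finally show ?thesis by simp
      qed
      have am: "a \<otimes> m \<in> A"
      proof -
        have "a \<otimes> m = a \<ominus> a \<otimes> c" using me ca cc mult_one_minus by simp
        moreover have "a \<ominus> a \<otimes> c \<in> A" using li_minus[OF A IH(2) li_mult[OF A ca]] c by blast
        ultimately show ?thesis by simp
      qed
      have bmB: "b \<otimes> m \<in> B"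
      proof -
        have "b \<otimes> m = b \<ominus> b \<otimes> c" using me cb cc mult_one_minus by simp
        moreover have "b \<ominus> b \<otimes> c \<in> B" using li_minus[OF IH(1) IH(3) li_mult[OF IH(1) cb]] c by blast
        ultimately show ?thesis by simp
      qed
      have bmM: "b \<otimes> m \<in> M" by (rule li_mult[OF LM cb m])
      have a'A: "c \<oplus> a \<otimes> m \<in> A" using li_add[OF A _ am] c by blast
      have "(c \<oplus> a \<otimes> m) \<oplus> b \<otimes> m = c \<oplus> (a \<oplus> b) \<otimes> m"
        using ca cb cc cm by (simp add: l_distr a_assoc)
      also have "\<dots> = \<one>" unfolding IH(4)[symmetric] using e[symmetric] cm by simp
      finally have e': "\<one> = (c \<oplus> a \<otimes> m) \<oplus> b \<otimes> m" by simp
      have LBM: "left_ideal R (B \<inter> M)" by (rule li_Int[OF IH(1) LM])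
      have "\<forall>M'\<in>insert M F. A \<inter> (B \<inter> M) \<subseteq> M'" using IH(5) by auto
      moreover have "b \<otimes> m \<in> B \<inter> M" using bmB bmM by simp
      ultimately show ?thesis using LBM a'A e'
        by (intro exI[of _ "B \<inter> M"] exI[of _ "c \<oplus> a \<otimes> m"] exI[of _ "b \<otimes> m"]) simp
    qed
  qed
  have "{M. maximal_left_ideal R M} \<subseteq> Pow (carrier R)"
  proof
    fix M assume "M \<in> {M. maximal_left_ideal R M}"
    then show "M \<in> Pow (carrier R)" using li_sub[OF max_li] by simp
  qed
  then have "finite {M. maximal_left_ideal R M}" using fin finite_subset by blast
  then obtain B a b where B: "left_ideal R B" "a \<in> A" "b \<in> B" "\<one> = a \<oplus> b"
    "\<forall>M\<in>{M. maximal_left_ideal R M}. A \<inter> B \<subseteq> M"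
    using key[OF _ subset_refl] by blast
  have cb: "b \<in> carrier R" using B(3) li_sub[OF B(1)] by blast
  have ca: "a \<in> carrier R" using B(2) sA by blast
  have "c \<ominus> c \<otimes> a \<in> jrad R" if c: "c \<in> A" for c
  proof -
    have cc: "c \<in> carrier R" using c sA by blast
    have "c \<otimes> a \<oplus> c \<otimes> b = c \<otimes> (a \<oplus> b)" using cc ca cb by (simp add: r_distr)
    also have "\<dots> = c" unfolding B(4)[symmetric] using cc by simp
    finally have "c = c \<otimes> a \<oplus> c \<otimes> b" by simp
    then have "c \<ominus> c \<otimes> a = (c \<otimes> a \<oplus> c \<otimes> b) \<ominus> c \<otimes> a" by simp
    also have "\<dots> = c \<otimes> b" using cc ca cb by (simp add: add_minus_cancel_left)
    finally have eq: "c \<ominus> c \<otimes> a = c \<otimes> b" .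
    have "c \<ominus> c \<otimes> a \<in> A" using li_minus[OF A c li_mult[OF A cc B(2)]] .
    moreover have "c \<ominus> c \<otimes> a \<in> B" unfolding eq by (rule li_mult[OF B(1) cc B(3)])
    ultimately have "c \<ominus> c \<otimes> a \<in> A \<inter> B" by blast
    then have "c \<ominus> c \<otimes> a \<in> M" if "maximal_left_ideal R M" for M using B(5) that by blast
    moreover have "c \<ominus> c \<otimes> a \<in> carrier R" using cc ca by simp
    ultimately show ?thesis unfolding jrad_def by blast
  qed
  then show ?thesis using B(2) by blast
qed

lemma weight_unique:
  assumes fin: "finite (carrier R)" and w1: "normalized_homogeneous_weight R w1"
    and w2: "normalized_homogeneous_weight R w2" and x0: "x0 \<in> carrier R"
  shows "w1 x0 = w2 x0"
proof -
  have "\<forall>x. x \<in> carrier R \<longrightarrow> card (lprinc R x) = n \<longrightarrow> w1 x = w2 x" for n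
  proof (induction n rule: less_induct)
    case (less n)
    show ?case
    proof (intro allI impI)
      fix x assume x: "x \<in> carrier R" and cn: "card (lprinc R x) = n"
      show "w1 x = w2 x"
      proof (cases "x = \<zero>")
        case True then show ?thesis using w1 w2 by (simp add: normalized_homogeneous_weight_def)
      next
        case False
        define P where "P = lprinc R x"
        define G where "G = {y \<in> P. lprinc R y = P}"
        have PC: "P \<subseteq> carrier R" unfolding P_def using li_sub[OF lprinc_li[OF x]] .
        have fP: "finite P" using PC fin finite_subset by blast
        have GP: "G \<subseteq> P" unfolding G_def by blast
        have fG: "finite G" using GP fP finite_subset by blast
        have xG: "x \<in> G" unfolding G_def P_def using lprinc_self[OF x] by simp
        have eqN: "w1 y = w2 y" if y: "y \<in> P - G" for y
        proof -
          have yc: "y \<in> carrier R" using y PC by blast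
          have "lprinc R y \<subseteq> P" unfolding P_def using lprinc_mono[OF x] y P_def by blast
          moreover have "lprinc R y \<noteq> P" using y unfolding G_def by blast
          ultimately have "card (lprinc R y) < card P" using fP psubset_card_mono by blast
          then show ?thesis using less.IH yc cn P_def by blast
        qed
        have c1: "w1 y = w1 x" if y: "y \<in> G" for y
        proof -
          have "y \<in> carrier R" "lprinc R y = lprinc R x" using y PC unfolding G_def P_def by auto
          then show ?thesis using w1 x unfolding normalized_homogeneous_weight_def by blast
        qed
        have c2: "w2 y = w2 x" if y: "y \<in> G" for y
        proof -
          have "y \<in> carrier R" "lprinc R y = lprinc R x" using y PC unfolding G_def P_def by auto
          then show ?thesis using w2 x unfolding normalized_homogeneous_weight_def by blast
        qed
        have xnz: "x \<in> carrier R - {\<zero>}" using x False by simp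
        have s1: "(\<Sum>y\<in>P. w1 y) = real (card P)"
          using w1 xnz unfolding normalized_homogeneous_weight_def P_def by blast
        have s2: "(\<Sum>y\<in>P. w2 y) = real (card P)"
          using w2 xnz unfolding normalized_homogeneous_weight_def P_def by blast
        have d1: "(\<Sum>y\<in>P. w1 y) = (\<Sum>y\<in>P - G. w1 y) + (\<Sum>y\<in>G. w1 y)"
          by (rule sum.subset_diff[OF GP fP])
        have d2: "(\<Sum>y\<in>P. w2 y) = (\<Sum>y\<in>P - G. w2 y) + (\<Sum>y\<in>G. w2 y)"
          by (rule sum.subset_diff[OF GP fP])
        have g1: "(\<Sum>y\<in>G. w1 y) = real (card G) * w1 x" using c1 by simp
        have g2: "(\<Sum>y\<in>G. w2 y) = real (card G) * w2 x" using c2 by simp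
        have n1: "(\<Sum>y\<in>P - G. w1 y) = (\<Sum>y\<in>P - G. w2 y)" using eqN by (rule sum.cong[OF refl])
        have "real (card G) * w1 x = real (card G) * w2 x" using s1 s2 d1 d2 g1 g2 n1 by linarith
        moreover have "card G > 0" using fG xG card_gt_0_iff by blast
        ultimately show ?thesis by simp
      qed
    qed
  qed
  then show ?thesis using x0 by blast
qed

end

locale frob_setup = ring +
  fixes \<psi> :: "'a \<Rightarrow> 'a set" and \<omega>' :: "'a set \<Rightarrow> real"
  assumes fin: "finite (carrier R)" and iso: "soc_top_iso R \<psi>"
    and w': "normalized_homogeneous_weight (R Quot jrad R) \<omega>'"
begin

abbreviation Q where "Q \<equiv> R Quot jrad R"
abbreviation h where "h r \<equiv> jrad R +> r"

lemma Jid: "ideal (jrad R) R" by (rule jrad_ideal)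
lemma Qring: "ring Q" by (rule ideal.quotient_is_ring[OF Jid])
lemma hhom: "(\<lambda>r. h r) \<in> ring_hom R Q" using ideal.rcos_ring_hom[OF Jid] by simp
lemma Qcarr: "carrier Q = h ` carrier R" by (auto simp: FactRing_def A_RCOSETS_def')
lemma Qzero: "\<zero>\<^bsub>Q\<^esub> = jrad R" by (simp add: FactRing_def)
lemma h_carr: "r \<in> carrier R \<Longrightarrow> h r \<in> carrier Q" using Qcarr by blast
lemma h_add: "a \<in> carrier R \<Longrightarrow> b \<in> carrier R \<Longrightarrow> h (a \<oplus> b) = h a \<oplus>\<^bsub>Q\<^esub> h b"
  using ring_hom_add[OF hhom] by simp
lemma h_mult: "a \<in> carrier R \<Longrightarrow> b \<in> carrier R \<Longrightarrow> h (a \<otimes> b) = h a \<otimes>\<^bsub>Q\<^esub> h b"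
  using ring_hom_mult[OF hhom] by simp
lemma h_zero: "h \<zero> = \<zero>\<^bsub>Q\<^esub>"
  using ring_hom_zero[OF hhom ring_axioms Qring] by simp
lemma h_J: "j \<in> jrad R \<Longrightarrow> h j = \<zero>\<^bsub>Q\<^esub>"
  using a_rcos_zero[OF Jid] Qzero by simp

lemma psi_bij: "bij_betw \<psi> (soc R) (carrier Q)"
  using iso unfolding soc_top_iso_def by blast
lemma psi_add: "x \<in> soc R \<Longrightarrow> y \<in> soc R \<Longrightarrow> \<psi> (x \<oplus> y) = \<psi> x \<oplus>\<^bsub>Q\<^esub> \<psi> y"
  using iso unfolding soc_top_iso_def by blast
lemma psi_mult: "r \<in> carrier R \<Longrightarrow> x \<in> soc R \<Longrightarrow> \<psi> (r \<otimes> x) = h r \<otimes>\<^bsub>Q\<^esub> \<psi> x"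
  using iso unfolding soc_top_iso_def by blast
lemma psi_carr: "x \<in> soc R \<Longrightarrow> \<psi> x \<in> carrier Q"
  using bij_betw_apply[OF psi_bij] .
lemma psi_inj: "inj_on \<psi> (soc R)"
  using bij_betw_imp_inj_on[OF psi_bij] .
lemma soc_carr: "soc R \<subseteq> carrier R" by (rule li_sub[OF soc_li])
lemma soc_zero: "\<zero> \<in> soc R" by (rule li_zero[OF soc_li])

lemma psi_zero: "\<psi> \<zero> = \<zero>\<^bsub>Q\<^esub>"
proof -
  have "\<psi> (\<zero> \<otimes> \<zero>) = h \<zero> \<otimes>\<^bsub>Q\<^esub> \<psi> \<zero>" using psi_mult[OF zero_closed soc_zero] .
  also have "\<dots> = \<zero>\<^bsub>Q\<^esub>"
  proof -
    interpret QR: ring Q by (rule Qring)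
    show ?thesis unfolding h_zero using QR.l_null[OF psi_carr[OF soc_zero]] .
  qed
  finally show ?thesis by simp
qed

lemma psi_lprinc:
  assumes x: "x \<in> soc R" shows "\<psi> ` lprinc R x = lprinc Q (\<psi> x)"
proof
  have xc: "x \<in> carrier R" using x soc_carr by blast
  show "\<psi> ` lprinc R x \<subseteq> lprinc Q (\<psi> x)"
  proof
    fix z assume "z \<in> \<psi> ` lprinc R x"
    then obtain y where y: "y \<in> lprinc R x" "z = \<psi> y" by blast
    obtain r where r: "r \<in> carrier R" "y = r \<otimes> x" by (rule lprincE[OF y(1)])
    have "z = h r \<otimes>\<^bsub>Q\<^esub> \<psi> x" using y r psi_mult x by simp
    then show "z \<in> lprinc Q (\<psi> x)" unfolding lprinc_def using h_carr[OF r(1)] by blast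
  qed
  show "lprinc Q (\<psi> x) \<subseteq> \<psi> ` lprinc R x"
  proof
    fix z assume "z \<in> lprinc Q (\<psi> x)"
    then obtain q where q: "q \<in> carrier Q" "z = q \<otimes>\<^bsub>Q\<^esub> \<psi> x" unfolding lprinc_def by blast
    obtain r where r: "r \<in> carrier R" "q = h r" using q(1) Qcarr by blast
    have "z = \<psi> (r \<otimes> x)" using q r psi_mult x by simp
    moreover have "r \<otimes> x \<in> lprinc R x" by (rule lprincI[OF r(1) refl])
    ultimately show "z \<in> \<psi> ` lprinc R x" by blast
  qed
qed

lemma soc_sum:
  assumes x: "x \<in> soc R" and nz: "x \<noteq> \<zero>"
  shows "(\<Sum>y\<in>lprinc R x. \<omega>' (\<psi> y)) = real (card (lprinc R x))"
proof -
  have Ps: "lprinc R x \<subseteq> soc R" by (rule lprinc_sub[OF soc_li x])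
  have inj: "inj_on \<psi> (lprinc R x)" using inj_on_subset[OF psi_inj Ps] .
  have "(\<Sum>y\<in>lprinc R x. \<omega>' (\<psi> y)) = (\<Sum>z\<in>\<psi> ` lprinc R x. \<omega>' z)"
    using sum.reindex[OF inj, of \<omega>'] by simp
  also have "\<dots> = (\<Sum>z\<in>lprinc Q (\<psi> x). \<omega>' z)" using psi_lprinc[OF x] by simp
  also have "\<dots> = real (card (lprinc Q (\<psi> x)))"
  proof -
    have "\<psi> x \<noteq> \<psi> \<zero>" using psi_inj x soc_zero nz unfolding inj_on_def by blast
    then have "\<psi> x \<in> carrier Q - {\<zero>\<^bsub>Q\<^esub>}" using psi_carr[OF x] psi_zero by simp
    then show ?thesis using w' unfolding normalized_homogeneous_weight_def by blast
  qed
  also have "\<dots> = real (card (\<psi> ` lprinc R x))" using psi_lprinc[OF x] by simp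
  also have "\<dots> = real (card (lprinc R x))" using card_image[OF inj] by simp
  finally show ?thesis .
qed

lemma add_minus_cancel2: "A \<in> carrier R \<Longrightarrow> B \<in> carrier R \<Longrightarrow> A \<oplus> (B \<ominus> A) = B"
  by (simp add: a_minus_def a_lcomm[of A B] r_neg)

lemma soc_principal:
  assumes L: "left_ideal R L" and Ls: "L \<subseteq> soc R"
  shows "\<exists>y0\<in>L. L = lprinc R y0"
proof -
  define A where "A = {r \<in> carrier R. h r \<in> \<psi> ` L}"
  note sL = li_sub[OF L]
  have LA: "left_ideal R A"
  proof (rule li_intro)
    show "A \<subseteq> carrier R" unfolding A_def by blast
    show "\<zero> \<in> A" unfolding A_def using h_zero psi_zero li_zero[OF L] by force
    show "a \<oplus> b \<in> A" if h: "a \<in> A" "b \<in> A" for a b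
    proof -
      obtain l1 where l1: "l1 \<in> L" "h a = \<psi> l1" using h(1) unfolding A_def by blast
      obtain l2 where l2: "l2 \<in> L" "h b = \<psi> l2" using h(2) unfolding A_def by blast
      have c: "a \<in> carrier R" "b \<in> carrier R" using h unfolding A_def by auto
      have e: "\<psi> (l1 \<oplus> l2) = \<psi> l1 \<oplus>\<^bsub>Q\<^esub> \<psi> l2" using psi_add l1 l2 Ls by blast
      have "h (a \<oplus> b) = \<psi> (l1 \<oplus> l2)" using h_add[OF c] l1(2) l2(2) e by simp
      moreover have "l1 \<oplus> l2 \<in> L" by (rule li_add[OF L l1(1) l2(1)])
      ultimately show ?thesis unfolding A_def using c by auto
    qed
    show "s \<otimes> a \<in> A" if h: "s \<in> carrier R" "a \<in> A" for s a
    proof -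
      obtain l1 where l1: "l1 \<in> L" "h a = \<psi> l1" using h(2) unfolding A_def by blast
      have c: "a \<in> carrier R" using h unfolding A_def by auto
      have "h (s \<otimes> a) = \<psi> (s \<otimes> l1)" using h_mult[OF h(1) c] l1 psi_mult[OF h(1)] Ls by auto
      moreover have "s \<otimes> l1 \<in> L" by (rule li_mult[OF L h(1) l1(1)])
      ultimately show ?thesis unfolding A_def using c h(1) by auto
    qed
    show "\<ominus> a \<in> A" if h: "a \<in> A" for a
    proof -
      have c: "a \<in> carrier R" using h unfolding A_def by auto
      have "(\<ominus> \<one>) \<otimes> a \<in> A" by (rule \<open>\<And>s a. s \<in> carrier R \<Longrightarrow> a \<in> A \<Longrightarrow> s \<otimes> a \<in> A\<close>) (simp_all add: h)
      then show ?thesis using c by (simp add: l_minus)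
    qed
  qed
  obtain a where a: "a \<in> A" and ap: "\<And>c. c \<in> A \<Longrightarrow> c \<ominus> c \<otimes> a \<in> jrad R"
    using complement[OF fin LA] by blast
  obtain y0 where y0: "y0 \<in> L" "h a = \<psi> y0" using a unfolding A_def by blast
  have ca: "a \<in> carrier R" using a unfolding A_def by blast
  have "L \<subseteq> lprinc R y0"
  proof
    fix y assume y: "y \<in> L"
    have "\<psi> y \<in> carrier Q" using psi_carr y Ls by blast
    then obtain c where c: "c \<in> carrier R" "\<psi> y = h c" using Qcarr by blast
    have cA: "c \<in> A" unfolding A_def using c y by auto
    have hc: "h c = h (c \<otimes> a)"
    proof -
      have "h c = h (c \<otimes> a \<oplus> (c \<ominus> c \<otimes> a))" using c ca by (simp add: add_minus_cancel2)
      also have "\<dots> = h (c \<otimes> a) \<oplus>\<^bsub>Q\<^esub> h (c \<ominus> c \<otimes> a)" using c ca by (simp add: h_add)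
      also have "\<dots> = h (c \<otimes> a) \<oplus>\<^bsub>Q\<^esub> \<zero>\<^bsub>Q\<^esub>" using h_J[OF ap[OF cA]] by simp
      also have "\<dots> = h (c \<otimes> a)"
      proof -
        interpret QR: ring Q by (rule Qring)
        show ?thesis using QR.r_zero[OF h_carr] c ca by simp
      qed
      finally show ?thesis .
    qed
    also have "\<dots> = h c \<otimes>\<^bsub>Q\<^esub> \<psi> y0" using h_mult c ca y0 by simp
    also have "\<dots> = \<psi> (c \<otimes> y0)" using psi_mult c y0 Ls by auto
    finally have "\<psi> y = \<psi> (c \<otimes> y0)" using c by simp
    moreover have "c \<otimes> y0 \<in> L" by (rule li_mult[OF L c(1) y0(1)])
    ultimately have "y = c \<otimes> y0" using psi_inj y Ls unfolding inj_on_def by blast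
    then show "y \<in> lprinc R y0" by (rule lprincI[OF c(1)])
  qed
  moreover have "lprinc R y0 \<subseteq> L" by (rule lprinc_sub[OF L y0(1)])
  ultimately show ?thesis using y0 by blast
qed

lemma main_weight:
  "normalized_homogeneous_weight R (\<lambda>x. if x \<in> soc R then \<omega>' (\<psi> x) else 1)"
  (is "normalized_homogeneous_weight R ?f")
proof -
  have w'0: "\<omega>' \<zero>\<^bsub>Q\<^esub> = 0" using w' unfolding normalized_homogeneous_weight_def by blast
  have f0: "?f \<zero> = 0" using soc_zero psi_zero w'0 by simp
  have fc: "?f x = ?f y" if x: "x \<in> carrier R" and y: "y \<in> carrier R"
    and e: "lprinc R x = lprinc R y" for x y
  proof -
    have "x \<in> soc R \<longleftrightarrow> y \<in> soc R"
    proof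
      assume "x \<in> soc R"
      then have "lprinc R x \<subseteq> soc R" by (rule lprinc_sub[OF soc_li])
      then show "y \<in> soc R" using lprinc_self[OF y] e by blast
    next
      assume "y \<in> soc R"
      then have "lprinc R y \<subseteq> soc R" by (rule lprinc_sub[OF soc_li])
      then show "x \<in> soc R" using lprinc_self[OF x] e by blast
    qed
    moreover have "\<omega>' (\<psi> x) = \<omega>' (\<psi> y)" if xs: "x \<in> soc R" and ys: "y \<in> soc R"
    proof -
      have "lprinc Q (\<psi> x) = lprinc Q (\<psi> y)" using psi_lprinc[OF xs] psi_lprinc[OF ys] e by simp
      then show ?thesis using w' psi_carr[OF xs] psi_carr[OF ys]
        unfolding normalized_homogeneous_weight_def by blast
    qed
    ultimately show ?thesis by auto
  qed
  have fs: "(\<Sum>y\<in>lprinc R x. ?f y) = real (card (lprinc R x))" if xx: "x \<in> carrier R - {\<zero>}" for x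
  proof -
    have x: "x \<in> carrier R" and nz: "x \<noteq> \<zero>" using xx by auto
    define P where "P = lprinc R x"
    have LP: "left_ideal R P" unfolding P_def by (rule lprinc_li[OF x])
    have fP: "finite P" using li_sub[OF LP] fin finite_subset by blast
    show ?thesis
    proof (cases "x \<in> soc R")
      case True
      have "P \<subseteq> soc R" unfolding P_def by (rule lprinc_sub[OF soc_li True])
      then have "(\<Sum>y\<in>P. ?f y) = (\<Sum>y\<in>P. \<omega>' (\<psi> y))" by (intro sum.cong) auto
      then show ?thesis using soc_sum[OF True nz] P_def by simp
    next
      case False
      define L where "L = P \<inter> soc R"
      have LL: "left_ideal R L" unfolding L_def by (rule li_Int[OF LP soc_li])
      have xP: "x \<in> P" unfolding P_def by (rule lprinc_self[OF x])
      have "P \<noteq> {\<zero>}" using xP nz by blast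
      then obtain K where K: "minimal_left_ideal R K" "K \<subseteq> P" using exists_minimal[OF fin LP] by blast
      have Ks: "K \<subseteq> soc R" by (rule min_sub_soc[OF K(1)])
      have "K \<noteq> {\<zero>}" "\<zero> \<in> K" using K(1) li_zero unfolding minimal_left_ideal_def by auto
      then obtain k where k: "k \<in> K" "k \<noteq> \<zero>" by blast
      have kL: "k \<in> L" unfolding L_def using k K(2) Ks by blast
      obtain y0 where y0: "y0 \<in> L" "L = lprinc R y0"
        using soc_principal[OF LL] unfolding L_def by blast
      have y0s: "y0 \<in> soc R" using y0(1) unfolding L_def by blast
      have y0nz: "y0 \<noteq> \<zero>"
      proof
        assume "y0 = \<zero>"
        then have "k \<in> lprinc R \<zero>" using kL y0(2) by simp
        then obtain r where "r \<in> carrier R" "k = r \<otimes> \<zero>" by (rule lprincE)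
        then show False using k(2) by simp
      qed
      have sL: "(\<Sum>y\<in>L. ?f y) = real (card L)"
      proof -
        have "(\<Sum>y\<in>L. ?f y) = (\<Sum>y\<in>L. \<omega>' (\<psi> y))" unfolding L_def by (intro sum.cong) auto
        also have "\<dots> = real (card L)" using soc_sum[OF y0s y0nz] y0(2) by simp
        finally show ?thesis .
      qed
      have sD: "(\<Sum>y\<in>P - soc R. ?f y) = real (card (P - soc R))"
      proof -
        have "(\<Sum>y\<in>P - soc R. ?f y) = (\<Sum>y\<in>P - soc R. 1)" by (intro sum.cong) auto
        then show ?thesis by simp
      qed
      have "(\<Sum>y\<in>P. ?f y) = (\<Sum>y\<in>L. ?f y) + (\<Sum>y\<in>P - soc R. ?f y)"
        unfolding L_def by (rule sum.Int_Diff[OF fP])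
      also have "\<dots> = real (card L) + real (card (P - soc R))" using sL sD by simp
      also have "\<dots> = (\<Sum>y\<in>L. (1::real)) + (\<Sum>y\<in>P - soc R. 1)" by simp
      also have "\<dots> = (\<Sum>y\<in>P. (1::real))" unfolding L_def by (rule sum.Int_Diff[OF fP, symmetric])
      also have "\<dots> = real (card P)" by simp
      finally show ?thesis unfolding P_def .
    qed
  qed
  show ?thesis unfolding normalized_homogeneous_weight_def
    using f0 fc fs by blast
qed

end


theorem theorem2p5:
  fixes R :: "('a, 'b) ring_scheme" and \<psi> :: "'a \<Rightarrow> 'a set"
    and \<omega> :: "'a \<Rightarrow> real" and \<omega>' :: "'a set \<Rightarrow> real"
  assumes "ring R" and "finite (carrier R)" and "frobenius_ring R"
    and "soc_top_iso R \<psi>"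
    and "normalized_homogeneous_weight R \<omega>"
    and "normalized_homogeneous_weight (R Quot jrad R) \<omega>'"
  shows "\<forall>x \<in> carrier R. \<omega> x = (if x \<in> soc R then \<omega>' (\<psi> x) else 1)"
proof -
  interpret F: frob_setup R \<psi> \<omega>'
    using assms by (simp add: frob_setup_def frob_setup_axioms_def)
  have W: "normalized_homogeneous_weight R (\<lambda>x. if x \<in> soc R then \<omega>' (\<psi> x) else 1)"
    by (rule F.main_weight)
  show ?thesis
  proof
    fix x assume x: "x \<in> carrier R"
    show "\<omega> x = (if x \<in> soc R then \<omega>' (\<psi> x) else 1)"
      using F.weight_unique[OF assms(2) assms(5) W x] by simp
  qed
qed

end
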